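(* There exist two players with additive valuations over a finite set of goods (where some single goods may have value $0$ to a player) such that no allocation is both EFX and Pareto optimal.
   Context: A valuation is a function $v:2^M\to\mathbb{R}_{\ge0}$ with $v(\emptyset)=0$ that is monotone: $v(S)\le v(T)$ whenever $S\subseteq T$. It is additive if $v(S)=\sum_{g\in S}v(\{g\})$ for all $S\subseteq M$. An allocation is an ordered partition $(A_1,\dots,A_n)$ of $M$; parts may be empty. It is EFX if for all players $i,j$ and every $g\in A_j$ we have $v_i(A_i)\ge v_i(A_j\setminus\{g\})$. It is Pareto optimal (PO) if there is no allocation $B$ with $v_i(B_i)\ge v_i(A_i)$ for all $i$ and $v_j(B_j)>v_j(A_j)$ for some $j$. *)

theory Defs
  imports Complex_Main
begin

definition valuation :: "'g set \<Rightarrow> ('g set \<Rightarrow> real) \<Rightarrow> bool" where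
  "valuation M v \<longleftrightarrow> v {} = 0 \<and> (\<forall>S. S \<subseteq> M \<longrightarrow> v S \<ge> 0)
     \<and> (\<forall>S T. S \<subseteq> T \<and> T \<subseteq> M \<longrightarrow> v S \<le> v T)"

definition additive_val :: "'g set \<Rightarrow> ('g set \<Rightarrow> real) \<Rightarrow> bool" where
  "additive_val M v \<longleftrightarrow> (\<forall>S. S \<subseteq> M \<longrightarrow> v S = (\<Sum>g\<in>S. v {g}))"

definition allocation :: "nat \<Rightarrow> 'g set \<Rightarrow> (nat \<Rightarrow> 'g set) \<Rightarrow> bool" where
  "allocation n M A \<longleftrightarrow> (\<Union>i<n. A i) = M \<and>
     (\<forall>i<n. \<forall>j<n. i \<noteq> j \<longrightarrow> A i \<inter> A j = {})"

definition EFX :: "nat \<Rightarrow> (nat \<Rightarrow> 'g set \<Rightarrow> real) \<Rightarrow> (nat \<Rightarrow> 'g set) \<Rightarrow> bool" where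
  "EFX n v A \<longleftrightarrow> (\<forall>i<n. \<forall>j<n. \<forall>g\<in>A j. v i (A i) \<ge> v i (A j - {g}))"

definition pareto_optimal ::
  "nat \<Rightarrow> 'g set \<Rightarrow> (nat \<Rightarrow> 'g set \<Rightarrow> real) \<Rightarrow> (nat \<Rightarrow> 'g set) \<Rightarrow> bool" where
  "pareto_optimal n M v A \<longleftrightarrow> \<not> (\<exists>B. allocation n M B \<and> (\<forall>i<n. v i (B i) \<ge> v i (A i))
       \<and> (\<exists>j<n. v j (B j) > v j (A j)))"

end

theory Submission
  imports Defs
begin

definition wv :: "nat \<Rightarrow> nat \<Rightarrow> real" where
  "wv i g = (if i = 0 then real g else (if g = 0 then 1 else if g = 1 then 0 else 2))"

definition vv :: "nat \<Rightarrow> nat set \<Rightarrow> real" where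
  "vv i S = (\<Sum>g\<in>S \<inter> {0,1,2}. wv i g)"

lemma wv_nonneg: "wv i g \<ge> 0" by (simp add: wv_def)

lemma vv_val: "valuation {0,1,2} (vv i)"
  unfolding valuation_def
proof (intro conjI allI impI)
  show "vv i {} = 0" by (simp add: vv_def)
next
  fix S :: "nat set" show "0 \<le> vv i S"
    unfolding vv_def by (rule sum_nonneg) (rule wv_nonneg)
next
  fix S T :: "nat set" assume a: "S \<subseteq> T \<and> T \<subseteq> {0,1,2}"
  have f: "finite (T \<inter> {0,1,2})" by simp
  have s: "S \<inter> {0,1,2} \<subseteq> T \<inter> {0,1,2}" using a by blast
  show "vv i S \<le> vv i T"
    unfolding vv_def by (rule sum_mono2[OF f s]) (rule wv_nonneg)
qed


lemma vv_single: assumes "g \<in> {0,1,2}" shows "vv i {g} = wv i g"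
proof -
  have "{g} \<inter> {0,1,2} = {g}" using assms by blast
  then show ?thesis unfolding vv_def by simp
qed

lemma vv_add: "additive_val {0,1,2} (vv i)"
  unfolding additive_val_def
proof (intro allI impI)
  fix S :: "nat set" assume S: "S \<subseteq> {0,1,2}"
  then have e: "S \<inter> {0,1,2} = S" by blast
  have "vv i S = (\<Sum>g\<in>S. wv i g)" unfolding vv_def e ..
  also have "\<dots> = (\<Sum>g\<in>S. vv i {g})"
  proof (rule sum.cong[OF refl])
    fix g assume "g \<in> S"
    then have "g \<in> {0,1,2}" using S by blast
    then show "wv i g = vv i {g}" by (rule vv_single[symmetric])
  qed
  finally show "vv i S = (\<Sum>g\<in>S. vv i {g})" .
qed

lemma sub3_cases: "X \<subseteq> {0::nat,1,2} \<Longrightarrow> X = {} \<or> X = {0} \<or> X = {1} \<or> X = {2} \<or>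
   X = {0,1} \<or> X = {0,2} \<or> X = {1,2} \<or> X = {0,1,2}"
proof -
  assume a: "X \<subseteq> {0::nat,1,2}"
  have e: "X = (if 0\<in>X then {0} else {}) \<union> (if 1\<in>X then {1} else {}) \<union> (if 2\<in>X then {2} else {})"
    using a by auto
  show ?thesis
    apply (cases "0 \<in> X"; cases "1 \<in> X"; cases "2 \<in> X")
    using e by (simp_all add: insert_commute)
qed

theorem theorem5p1:
  shows "\<exists>(M :: nat set) (v :: nat \<Rightarrow> nat set \<Rightarrow> real).
     finite M \<and> (\<forall>i<2. valuation M (v i) \<and> additive_val M (v i)) \<and>
     \<not> (\<exists>A. allocation 2 M A \<and> EFX 2 v A \<and> pareto_optimal 2 M v A)"
proof (intro exI conjI)
  show "finite {0::nat,1,2}" by simp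
  show "\<forall>i<2. valuation {0::nat,1,2} (vv i) \<and> additive_val {0,1,2} (vv i)"
    by (intro allI impI conjI vv_val vv_add)
  show "\<not> (\<exists>A. allocation 2 {0,1,2} A \<and> EFX 2 vv A \<and> pareto_optimal 2 {0,1,2} vv A)"
  proof
    assume "\<exists>A. allocation 2 {0,1,2} A \<and> EFX 2 vv A \<and> pareto_optimal 2 {0,1,2} vv A"
    then obtain A where al: "allocation 2 {0,1,2} A" and ef: "EFX 2 vv A"
      and po: "pareto_optimal 2 {0,1,2} vv A" by blast
    have l2: "{..<2::nat} = {0,1}" by auto
    have i2: "\<And>i::nat. i < 2 \<Longrightarrow> i = 0 \<or> i = 1" by auto
    have u: "A 0 \<union> A 1 = {0,1,2}"
      using al unfolding allocation_def l2 by simp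
    have "\<forall>i<2. \<forall>j<2. i \<noteq> j \<longrightarrow> A i \<inter> A j = {}"
      using al unfolding allocation_def by (rule conjunct2)
    then have d: "A 0 \<inter> A 1 = {}" by (rule allE[of _ 0]) simp
    have A1: "A 1 = {0,1,2} - A 0" using u d by blast
    have "A 0 \<subseteq> {0,1,2}" using u by blast
    note cases = sub3_cases[OF this]
    have ef': "\<And>i j g. i < 2 \<Longrightarrow> j < 2 \<Longrightarrow> g \<in> A j \<Longrightarrow> vv i (A i) \<ge> vv i (A j - {g})"
      using ef unfolding EFX_def by blast
    from po have nex: "\<not> (\<exists>B. allocation 2 {0,1,2} B \<and> (\<forall>i<2. vv i (B i) \<ge> vv i (A i))
       \<and> (\<exists>j<2. vv j (B j) > vv j (A j)))" unfolding pareto_optimal_def .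
    have po': "\<And>B. allocation 2 {0,1,2} B \<Longrightarrow> vv 0 (B 0) \<ge> vv 0 (A 0) \<Longrightarrow> vv 1 (B 1) \<ge> vv 1 (A 1)
       \<Longrightarrow> vv 0 (B 0) > vv 0 (A 0) \<or> vv 1 (B 1) > vv 1 (A 1) \<Longrightarrow> False"
    proof -
      fix B assume a: "allocation 2 {0,1,2} B" "vv 0 (B 0) \<ge> vv 0 (A 0)" "vv 1 (B 1) \<ge> vv 1 (A 1)"
        "vv 0 (B 0) > vv 0 (A 0) \<or> vv 1 (B 1) > vv 1 (A 1)"
      have f1: "\<forall>i<2. vv i (B i) \<ge> vv i (A i)"
      proof (intro allI impI)
        fix i :: nat assume "i < 2"
        then have "i = 0 \<or> i = 1" by (rule i2)
        then show "vv i (B i) \<ge> vv i (A i)" using a(2,3) by (elim disjE) simp_all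
      qed
      have f2: "\<exists>j<2. vv j (B j) > vv j (A j)" using a(4)
      proof
        assume "vv 0 (B 0) > vv 0 (A 0)" then show ?thesis by (intro exI[of _ 0]) simp
      next
        assume "vv 1 (B 1) > vv 1 (A 1)" then show ?thesis by (intro exI[of _ 1]) simp
      qed
      have ex: "\<exists>B. allocation 2 {0,1,2} B \<and> (\<forall>i<2. vv i (B i) \<ge> vv i (A i))
       \<and> (\<exists>j<2. vv j (B j) > vv j (A j))" using a(1) f1 f2 by blast
      show False using nex ex by (rule notE)
    qed
    have alB: "\<And>X::nat set. X \<subseteq> {0,1,2} \<Longrightarrow> allocation 2 {0,1,2} (\<lambda>i. if i = 0 then X else {0,1,2} - X)"
    proof -
      fix X :: "nat set" assume X: "X \<subseteq> {0,1,2}"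
      have "(\<Union>i<(2::nat). if i = 0 then X else {0,1,2} - X) = X \<union> ({0,1,2} - X)"
        unfolding l2 by simp
      also have "\<dots> = {0,1,2}" using X by blast
      finally have un: "(\<Union>i<(2::nat). if i = 0 then X else {0,1,2} - X) = {0,1,2}" .
      show "allocation 2 {0,1,2} (\<lambda>i. if i = 0 then X else {0,1,2} - X)"
        unfolding allocation_def by (intro conjI allI impI un) (auto dest!: i2)
    qed
    from cases show False
    proof (elim disjE)
      assume h: "A 0 = {}"
      have h1: "A 1 = {0,1,2}" unfolding A1 h by (simp add: insert_Diff_if)
      show False using ef'[of 0 1 0] unfolding h h1 by (simp add: vv_def wv_def insert_Diff_if)
    next
      assume h: "A 0 = {0}"
      have h1: "A 1 = {1,2}" unfolding A1 h by (simp add: insert_Diff_if)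
      show False using ef'[of 0 1 1] unfolding h h1 by (simp add: vv_def wv_def insert_Diff_if)
    next
      assume h: "A 0 = {1}"
      have h1: "A 1 = {0,2}" unfolding A1 h by (simp add: insert_Diff_if)
      show False using ef'[of 0 1 0] unfolding h h1 by (simp add: vv_def wv_def insert_Diff_if)
    next
      assume h: "A 0 = {2}"
      have h1: "A 1 = {0,1}" unfolding A1 h by (simp add: insert_Diff_if)
      show False
        apply (rule po'[OF alB[of "{1,2}"]])
        unfolding h h1 by (simp_all add: vv_def wv_def insert_Diff_if)
    next
      assume h: "A 0 = {0,1}"
      have h1: "A 1 = {2}" unfolding A1 h by (simp add: insert_Diff_if)
      show False
        apply (rule po'[OF alB[of "{1}"]])
        unfolding h h1 by (simp_all add: vv_def wv_def insert_Diff_if)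
    next
      assume h: "A 0 = {0,2}"
      have h1: "A 1 = {1}" unfolding A1 h by (simp add: insert_Diff_if)
      show False using ef'[of 1 0 0] unfolding h h1 by (simp add: vv_def wv_def insert_Diff_if)
    next
      assume h: "A 0 = {1,2}"
      have h1: "A 1 = {0}" unfolding A1 h by (simp add: insert_Diff_if)
      show False using ef'[of 1 0 1] unfolding h h1 by (simp add: vv_def wv_def insert_Diff_if)
    next
      assume h: "A 0 = {0,1,2}"
      have h1: "A 1 = {}" unfolding A1 h by (simp add: insert_Diff_if)
      show False using ef'[of 1 0 0] unfolding h h1 by (simp add: vv_def wv_def insert_Diff_if)
    qed
  qed
qed

end
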